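(* Let $X$ be a (real) Banach space with $\dim X>1$. Then $D(X)\ge\sqrt{2}$. More precisely, if $Y$ is any nonzero Banach space, then $d(Y\oplus_1\mathbb{R},\,Y\oplus_2\mathbb{R})\ge d(\ell_1^2,\ell_2^2)=\sqrt2$.
   Context: For isomorphic Banach spaces $X_1,X_2$, $d(X_1,X_2)=\inf\{\|T\|\,\|T^{-1}\|\}$ over all linear isomorphisms $T$ of $X_1$ onto $X_2$; $D(X)=\sup\{d(X_1,X_2): X_1,X_2 \text{ isomorphic to } X\}$. $Y\oplus_p\mathbb{R}$ denotes $Y\times\mathbb{R}$ with norm $\|(y,t)\|=(\|y\|^p+|t|^p)^{1/p}$; $\ell_p^2$ is $\mathbb{R}^2$ with the $\ell_p$ norm. *)

theory Defs
  imports "HOL-Analysis.Analysis" "HOL-Library.Extended_Real"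
begin

definition is_norm :: "('a::real_vector \<Rightarrow> real) \<Rightarrow> bool" where
  "is_norm N \<longleftrightarrow> (\<forall>x. 0 \<le> N x) \<and> (\<forall>x. N x = 0 \<longleftrightarrow> x = 0)
     \<and> (\<forall>x y. N (x + y) \<le> N x + N y) \<and> (\<forall>c x. N (c *\<^sub>R x) = \<bar>c\<bar> * N x)"

definition opnorm :: "('a::real_vector \<Rightarrow> real) \<Rightarrow> ('b::real_vector \<Rightarrow> real) \<Rightarrow> ('a \<Rightarrow> 'b) \<Rightarrow> ereal" where
  "opnorm N1 N2 T = (SUP x\<in>{x. N1 x \<le> 1}. ereal (N2 (T x)))"

definition bm_dist :: "('a::real_vector \<Rightarrow> real) \<Rightarrow> ('b::real_vector \<Rightarrow> real) \<Rightarrow> ereal" where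
  "bm_dist N1 N2 = (INF T\<in>{T. linear T \<and> bij T \<and> opnorm N1 N2 T < \<infinity> \<and> opnorm N2 N1 (inv T) < \<infinity>}.
                      opnorm N1 N2 T * opnorm N2 N1 (inv T))"

text \<open>Norms on the underlying space of X equivalent to the given (complete) norm;
  every Banach space isomorphic to X is isometric to (X, N) for such an N.\<close>
definition equiv_norm :: "('a::real_normed_vector \<Rightarrow> real) \<Rightarrow> bool" where
  "equiv_norm N \<longleftrightarrow> is_norm N \<and> (\<exists>c C. 0 < c \<and> 0 < C \<and> (\<forall>x. c * norm x \<le> N x \<and> N x \<le> C * norm x))"

definition BM_D :: "'a::real_normed_vector itself \<Rightarrow> ereal" where
  "BM_D (t::'a itself) = (SUP p\<in>{p::('a \<Rightarrow> real) \<times> ('a \<Rightarrow> real). equiv_norm (fst p) \<and> equiv_norm (snd p)}.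
       bm_dist (fst p) (snd p))"

definition sum_p_norm :: "real \<Rightarrow> ('a::real_normed_vector \<times> real) \<Rightarrow> real" where
  "sum_p_norm p = (\<lambda>(y, t). (norm y powr p + \<bar>t\<bar> powr p) powr (1 / p))"

definition lp2_norm :: "real \<Rightarrow> (real \<times> real) \<Rightarrow> real" where
  "lp2_norm p = (\<lambda>(a, b). (\<bar>a\<bar> powr p + \<bar>b\<bar> powr p) powr (1 / p))"

end

theory Submission
  imports Defs
begin

definition psub :: "('a::real_normed_vector \<times> real) set \<Rightarrow> bool" where
  "psub G \<longleftrightarrow> (0,0) \<in> G \<and> (\<forall>p\<in>G. \<forall>q\<in>G. p + q \<in> G) \<and> (\<forall>c. \<forall>p\<in>G. c *\<^sub>R p \<in> G)
     \<and> (\<forall>x a. (x,a) \<in> G \<longrightarrow> a \<le> norm x)"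

lemma psub_extend:
  fixes M :: "('a::real_normed_vector \<times> real) set"
  assumes M: "psub M" and x: "\<forall>a. (x,a) \<notin> M"
  shows "\<exists>M'. psub M' \<and> M \<subseteq> M' \<and> M' \<noteq> M"
proof -
  have add: "(m1+m2, a1+a2) \<in> M" if "(m1,a1) \<in> M" "(m2,a2) \<in> M" for m1 a1 m2 a2
    using M that unfolding psub_def by (metis add_Pair)
  have scl: "(c *\<^sub>R m, c * a) \<in> M" if "(m,a) \<in> M" for m a c
    using M that unfolding psub_def by (metis scaleR_Pair real_scaleR_def)
  have bnd: "a \<le> norm m" if "(m,a) \<in> M" for m a
    using M that unfolding psub_def by blast
  have z: "(0,0) \<in> M" using M unfolding psub_def by blast
  define L where "L = {a - norm (m - x) | m a. (m,a) \<in> M}"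
  have key: "a1 - norm (m1 - x) \<le> norm (m2 + x) - a2" if "(m1,a1) \<in> M" "(m2,a2) \<in> M" for m1 a1 m2 a2
  proof -
    have "a1 + a2 \<le> norm (m1 + m2)" using bnd add that by blast
    also have "\<dots> = norm ((m1 - x) + (m2 + x))" by (simp add: algebra_simps)
    also have "\<dots> \<le> norm (m1 - x) + norm (m2 + x)" by (rule norm_triangle_ineq)
    finally show ?thesis by simp
  qed
  define c where "c = Sup L"
  have Lne: "L \<noteq> {}" using z unfolding L_def by blast
  have Lbdd: "bdd_above L" unfolding L_def bdd_above_def using key z by blast
  have c1: "a - norm (m - x) \<le> c" if "(m,a) \<in> M" for m a
    unfolding c_def by (rule cSup_upper[OF _ Lbdd]) (use that L_def in blast)
  have c2: "c \<le> norm (m + x) - a" if "(m,a) \<in> M" for m a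
    unfolding c_def by (rule cSup_least[OF Lne]) (use that key L_def in blast)
  define M' where "M' = {(m + t *\<^sub>R x, a + t * c) | m a t. (m,a) \<in> M}"
  have bound: "a + t * c \<le> norm (m + t *\<^sub>R x)" if "(m,a) \<in> M" for m a t
  proof (cases t "0::real" rule: linorder_cases)
    case less
    define s where "s = - t"
    have s: "s > 0" using less s_def by simp
    have "(inverse s *\<^sub>R m, inverse s * a) \<in> M" using scl that by blast
    from c1[OF this] have "inverse s * a - norm (inverse s *\<^sub>R m - x) \<le> c" .
    also have "inverse s *\<^sub>R m - x = inverse s *\<^sub>R (m - s *\<^sub>R x)" using s by (simp add: algebra_simps)
    finally have "inverse s * a - inverse s * norm (m - s *\<^sub>R x) \<le> c" using s by simp
    hence "a - norm (m - s *\<^sub>R x) \<le> s * c" using s by (simp add: field_simps)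
    thus ?thesis using s_def by simp
  next
    case equal thus ?thesis using bnd that by simp
  next
    case greater
    have "(inverse t *\<^sub>R m, inverse t * a) \<in> M" using scl that by blast
    from c2[OF this] have "c \<le> norm (inverse t *\<^sub>R m + x) - inverse t * a" .
    also have "inverse t *\<^sub>R m + x = inverse t *\<^sub>R (m + t *\<^sub>R x)" using greater by (simp add: algebra_simps)
    finally have "c \<le> inverse t * norm (m + t *\<^sub>R x) - inverse t * a" using greater by simp
    hence "t * c \<le> norm (m + t *\<^sub>R x) - a" using greater by (simp add: field_simps)
    thus ?thesis by simp
  qed
  have "psub M'"
    unfolding psub_def
  proof (intro conjI allI ballI impI)
    show "(0,0) \<in> M'" unfolding M'_def using z by force
  next
    fix p q assume "p \<in> M'" "q \<in> M'"
    then obtain m1 a1 t1 m2 a2 t2 where "p = (m1 + t1 *\<^sub>R x, a1 + t1 * c)" "(m1,a1) \<in> M"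
      "q = (m2 + t2 *\<^sub>R x, a2 + t2 * c)" "(m2,a2) \<in> M" unfolding M'_def by blast
    moreover have "p + q = ((m1+m2) + (t1+t2) *\<^sub>R x, (a1+a2) + (t1+t2)*c)"
      using calculation by (simp add: algebra_simps)
    ultimately show "p + q \<in> M'" unfolding M'_def using add by blast
  next
    fix d p assume "p \<in> M'"
    then obtain m a t where "p = (m + t *\<^sub>R x, a + t * c)" "(m,a) \<in> M" unfolding M'_def by blast
    moreover have "d *\<^sub>R p = (d *\<^sub>R m + (d*t) *\<^sub>R x, d * a + (d*t)*c)"
      using calculation by (simp add: algebra_simps)
    ultimately show "d *\<^sub>R p \<in> M'" unfolding M'_def using scl by blast
  next
    fix y b assume "(y,b) \<in> M'"
    then obtain m a t where "(y,b) = (m + t *\<^sub>R x, a + t * c)" "(m,a) \<in> M" unfolding M'_def by blast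
    thus "b \<le> norm y" using bound by auto
  qed
  moreover have "M \<subseteq> M'"
  proof
    fix p assume "p \<in> M"
    then obtain m a where "p = (m,a)" "(m,a) \<in> M" by (cases p) auto
    thus "p \<in> M'" unfolding M'_def by force
  qed
  moreover have "(x, c) \<in> M'" unfolding M'_def using z by force
  hence "M' \<noteq> M" using x by blast
  ultimately show ?thesis by blast
qed

lemma hahn_banach_norm:
  fixes u :: "'a::real_normed_vector"
  shows "\<exists>f. linear f \<and> (\<forall>x. \<bar>f x\<bar> \<le> norm x) \<and> f u = norm u"
proof -
  define A where "A = {G :: ('a \<times> real) set. psub G \<and> (u, norm u) \<in> G}"
  define G0 where "G0 = range (\<lambda>t. (t *\<^sub>R u, t * norm u))"
  have "G0 \<in> A"
    unfolding A_def psub_def G0_def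
  proof (intro CollectI conjI allI ballI impI)
    show "(0,0) \<in> range (\<lambda>t. (t *\<^sub>R u, t * norm u))" by (rule range_eqI[of _ _ 0]) simp
    show "(u, norm u) \<in> range (\<lambda>t. (t *\<^sub>R u, t * norm u))" by (rule range_eqI[of _ _ 1]) simp
  next
    fix p q assume "p \<in> range (\<lambda>t. (t *\<^sub>R u, t * norm u))" "q \<in> range (\<lambda>t. (t *\<^sub>R u, t * norm u))"
    then obtain s t where "p = (s *\<^sub>R u, s * norm u)" "q = (t *\<^sub>R u, t * norm u)" by blast
    thus "p + q \<in> range (\<lambda>t. (t *\<^sub>R u, t * norm u))"
      by (intro range_eqI[of _ _ "s+t"]) (simp add: algebra_simps)
  next
    fix d p assume "p \<in> range (\<lambda>t. (t *\<^sub>R u, t * norm u))"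
    then obtain s where "p = (s *\<^sub>R u, s * norm u)" by blast
    thus "d *\<^sub>R p \<in> range (\<lambda>t. (t *\<^sub>R u, t * norm u))"
    proof -
      have "d *\<^sub>R p = ((d * s) *\<^sub>R u, (d * s) * norm u)" using \<open>p = _\<close> by simp
      thus ?thesis by blast
    qed
  next
    fix x a assume "(x, a) \<in> range (\<lambda>t. (t *\<^sub>R u, t * norm u))"
    then obtain s where "x = s *\<^sub>R u" "a = s * norm u" by auto
    thus "a \<le> norm x" by (simp add: mult_right_mono)
  qed
  hence Ane: "A \<noteq> {}" by blast
  have "\<exists>M\<in>A. \<forall>X\<in>A. M \<subseteq> X \<longrightarrow> X = M"
  proof (rule subset_Zorn_nonempty[OF Ane])
    fix C assume Cne: "C \<noteq> {}" and ch: "subset.chain A C"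
    have CA: "C \<subseteq> A" and cmp: "\<forall>X\<in>C. \<forall>Y\<in>C. X \<subseteq> Y \<or> Y \<subseteq> X" using ch by (auto simp: subset_chain_def)
    obtain G where G: "G \<in> C" using Cne by blast
    show "\<Union>C \<in> A"
      unfolding A_def psub_def
    proof (intro CollectI conjI allI ballI impI)
      show "(0,0) \<in> \<Union>C" using G CA unfolding A_def psub_def by blast
      show "(u, norm u) \<in> \<Union>C" using G CA unfolding A_def by blast
    next
      fix p q assume "p \<in> \<Union>C" "q \<in> \<Union>C"
      then obtain X Y where XY: "X \<in> C" "Y \<in> C" "p \<in> X" "q \<in> Y" by blast
      show "p + q \<in> \<Union>C"
      proof (cases "X \<subseteq> Y")
        case True
        hence "p + q \<in> Y" using XY CA unfolding A_def psub_def by blast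
        thus ?thesis using XY by blast
      next
        case False
        hence "Y \<subseteq> X" using cmp XY by blast
        hence "p + q \<in> X" using XY CA unfolding A_def psub_def by blast
        thus ?thesis using XY by blast
      qed
    next
      fix d p assume "p \<in> \<Union>C"
      then obtain X where "X \<in> C" "p \<in> X" by blast
      thus "d *\<^sub>R p \<in> \<Union>C" using CA unfolding A_def psub_def by blast
    next
      fix x a assume "(x,a) \<in> \<Union>C"
      thus "a \<le> norm x" using CA unfolding A_def psub_def by blast
    qed
  qed
  then obtain M where MA: "M \<in> A" and max: "\<forall>X\<in>A. M \<subseteq> X \<longrightarrow> X = M" by blast
  have M: "psub M" and uM: "(u, norm u) \<in> M" using MA A_def by auto
  have tot: "\<exists>a. (x,a) \<in> M" for x
  proof (rule ccontr)
    assume "\<not> (\<exists>a. (x,a) \<in> M)"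
    then obtain M' where "psub M'" "M \<subseteq> M'" "M' \<noteq> M" using psub_extend[OF M] by blast
    moreover hence "M' \<in> A" using uM A_def by auto
    ultimately show False using max by blast
  qed
  have add: "(m1+m2, a1+a2) \<in> M" if "(m1,a1) \<in> M" "(m2,a2) \<in> M" for m1 a1 m2 a2
    using M that unfolding psub_def by (metis add_Pair)
  have scl: "(c *\<^sub>R m, c * a) \<in> M" if "(m,a) \<in> M" for m a c
    using M that unfolding psub_def by (metis scaleR_Pair real_scaleR_def)
  have bnd: "a \<le> norm m" if "(m,a) \<in> M" for m a
    using M that unfolding psub_def by blast
  have uniq: "a = b" if "(x,a) \<in> M" "(x,b) \<in> M" for x a b
  proof -
    have "(x + (-1) *\<^sub>R x, a + (-1) * b) \<in> M" using add scl that by blast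
    hence 1: "a - b \<le> 0" using bnd by fastforce
    have "(x + (-1) *\<^sub>R x, b + (-1) * a) \<in> M" using add scl that by blast
    hence "b - a \<le> 0" using bnd by fastforce
    thus ?thesis using 1 by simp
  qed
  define f where "f x = (SOME a. (x,a) \<in> M)" for x
  have fM: "(x, f x) \<in> M" for x unfolding f_def using tot by (rule someI_ex)
  have "linear f"
  proof (rule linearI)
    fix x y show "f (x + y) = f x + f y" using uniq fM add by blast
  next
    fix c x show "f (c *\<^sub>R x) = c *\<^sub>R f x" using uniq fM scl by fastforce
  qed
  moreover have "\<bar>f x\<bar> \<le> norm x" for x
  proof -
    have "f x \<le> norm x" using bnd fM by blast
    moreover have "((-1) *\<^sub>R x, (-1) * f x) \<in> M" using scl fM by blast
    hence "- f x \<le> norm x" using bnd by fastforce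
    ultimately show ?thesis by simp
  qed
  moreover have "f u = norm u" using uniq fM uM by blast
  ultimately show ?thesis by blast
qed

lemma key:
  fixes P :: "'v::real_vector \<Rightarrow> 'w::real_normed_vector" and f :: "'v \<Rightarrow> real" and e w :: 'v
    and Q :: "'u::real_vector \<Rightarrow> 'z::real_normed_vector" and g :: "'u \<Rightarrow> real" and d :: 'u
  assumes lP: "linear P" and lf: "linear f" and inj: "\<And>x. P x = 0 \<Longrightarrow> f x = 0 \<Longrightarrow> x = 0"
    and Pe: "P e = 0" and fe: "f e = 1" and fw: "f w = 0" and Pw: "P w \<noteq> 0"
    and lQ: "linear Q" and lg: "linear g" and injQ: "\<And>x. Q x = 0 \<Longrightarrow> g x = 0 \<Longrightarrow> x = 0"
    and Qd: "Q d = 0" and gd: "g d = 1"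
  defines "N1 \<equiv> (\<lambda>x. norm (P x) + \<bar>f x\<bar>)" and "N2 \<equiv> (\<lambda>x. sqrt ((norm (Q x))\<^sup>2 + (g x)\<^sup>2))"
  shows "ereal (sqrt 2) \<le> bm_dist N1 N2"
  unfolding bm_dist_def
proof (rule INF_greatest, clarify)
  fix T :: "'v \<Rightarrow> 'u"
  assume lT: "linear T" and bT: "bij T" and o1: "opnorm N1 N2 T < \<infinity>" and o2: "opnorm N2 N1 (inv T) < \<infinity>"
  interpret P: linear P by fact
  interpret f: linear f by fact
  interpret T: linear T by fact
  interpret Q: linear Q by fact
  interpret g: linear g by fact
  have N2nn: "0 \<le> N2 x" for x unfolding N2_def by simp
  have N2z: "x = 0" if "N2 x = 0" for x
  proof -
    have "(norm (Q x))\<^sup>2 + (g x)\<^sup>2 = 0" using that unfolding N2_def by simp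
    hence "norm (Q x) = 0" "g x = 0" by (smt (verit) zero_le_power2 power_zero_numeral zero_less_power2)+
    thus ?thesis using injQ by simp
  qed
  have N1s: "N1 (c *\<^sub>R x) = \<bar>c\<bar> * N1 x" for c x
    unfolding N1_def by (simp add: P.scaleR f.scaleR abs_mult distrib_left)
  have N2s: "N2 (c *\<^sub>R x) = \<bar>c\<bar> * N2 x" for c x
  proof -
    have "(norm (Q (c *\<^sub>R x)))\<^sup>2 + (g (c *\<^sub>R x))\<^sup>2 = c\<^sup>2 * ((norm (Q x))\<^sup>2 + (g x)\<^sup>2)"
      by (simp add: Q.scaleR g.scaleR power_mult_distrib algebra_simps)
    thus ?thesis unfolding N2_def by (simp add: real_sqrt_mult)
  qed
  have N10: "N1 0 = 0" unfolding N1_def by (simp add: P.zero f.zero)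
  have up1: "ereal (N2 (T x)) \<le> opnorm N1 N2 T" if "N1 x \<le> 1" for x
    unfolding opnorm_def by (rule SUP_upper) (use that in simp)
  have up2: "ereal (N1 (inv T y)) \<le> opnorm N2 N1 (inv T)" if "N2 y \<le> 1" for y
    unfolding opnorm_def by (rule SUP_upper) (use that in simp)
  obtain m where m: "opnorm N1 N2 T = ereal m" using o1 up1[of 0] N10 by (cases "opnorm N1 N2 T") auto
  obtain n where n: "opnorm N2 N1 (inv T) = ereal n"
    using o2 up2[of 0] N2_def Q.zero g.zero by (cases "opnorm N2 N1 (inv T)") auto
  have m0: "0 \<le> m" using up1[of 0] N10 m N2nn[of "T 0"] by simp
  have hm: "N2 (T x) \<le> m" if "N1 x \<le> 1" for x using up1[OF that] m by simp
  have hn: "N1 (inv T y) \<le> n" if "N2 y \<le> 1" for y using up2[OF that] n by simp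
  have injT: "inj T" using bT bij_is_inj by blast
  have hinv: "N1 x \<le> n * N2 (T x)" for x
  proof (cases "N2 (T x) = 0")
    case True
    hence "T x = 0" using N2z by blast
    hence "x = 0" using injT T.zero by (metis injD)
    thus ?thesis using N10 True by simp
  next
    case False
    define c where "c = N2 (T x)"
    have c: "c > 0" using False N2nn c_def by (simp add: order_less_le)
    have "T ((1/c) *\<^sub>R x) = (1/c) *\<^sub>R T x" by (simp add: T.scaleR)
    hence "inv T ((1/c) *\<^sub>R T x) = (1/c) *\<^sub>R x" using injT by (metis inv_f_f)
    moreover have "N2 ((1/c) *\<^sub>R T x) \<le> 1" using c by (simp add: N2s c_def)
    ultimately have "N1 ((1/c) *\<^sub>R x) \<le> n" using hn by metis
    hence "N1 x / c \<le> n" using c by (simp add: N1s)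
    thus ?thesis using c c_def by (simp add: field_simps)
  qed
  have n0: "0 \<le> n" using hinv[of e] N1_def fe N2nn[of "T e"]
    by (smt (verit) mult_nonpos_nonneg norm_ge_zero)
  have "\<exists>b p \<alpha> \<beta>. f b = 0 \<and> norm (P b) = 1 \<and> Q (T e) = \<alpha> *\<^sub>R p \<and> Q (T b) = \<beta> *\<^sub>R p"
  proof -
    define z where "z = inv T d"
    have Tz: "T z = d" unfolding z_def using bT by (simp add: bij_is_surj surj_f_inv_f)
    show ?thesis
    proof (cases "P z = 0")
      case True
      have "P (z - f z *\<^sub>R e) = 0" "f (z - f z *\<^sub>R e) = 0"
        using True Pe fe by (simp_all add: P.diff P.scaleR f.diff f.scaleR)
      hence zz: "z = f z *\<^sub>R e" using inj by (metis eq_iff_diff_eq_0)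
      hence fz: "f z \<noteq> 0" using Tz gd T.zero g.zero by fastforce
      have "d = f z *\<^sub>R T e" using Tz zz T.scaleR by metis
      hence "(1 / f z) *\<^sub>R d = (1 / f z) *\<^sub>R (f z *\<^sub>R T e)" by (rule arg_cong)
      hence "T e = (1 / f z) *\<^sub>R d" using fz by simp
      hence PTe: "Q (T e) = 0 *\<^sub>R Q (T w)" using Qd by (simp add: Q.scaleR)
      define b where "b = (1 / norm (P w)) *\<^sub>R w"
      have "f b = 0" "norm (P b) = 1" "Q (T b) = (1 / norm (P w)) *\<^sub>R Q (T w)"
        unfolding b_def using fw Pw by (simp_all add: f.scaleR P.scaleR T.scaleR Q.scaleR)
      thus ?thesis using PTe by blast
    next
      case False
      define b where "b = (1 / norm (P z)) *\<^sub>R (z - f z *\<^sub>R e)"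
      have fb: "f b = 0" unfolding b_def using fe by (simp add: f.scaleR f.diff)
      have Pb: "P b = (1 / norm (P z)) *\<^sub>R P z" unfolding b_def using Pe by (simp add: P.scaleR P.diff)
      hence nb: "norm (P b) = 1" using False by simp
      have "z = norm (P z) *\<^sub>R b + f z *\<^sub>R e" unfolding b_def using False by simp
      hence "Q (T z) = norm (P z) *\<^sub>R Q (T b) + f z *\<^sub>R Q (T e)"
        by (metis Q.add Q.scaleR T.add T.scaleR)
      hence "0 = norm (P z) *\<^sub>R Q (T b) + f z *\<^sub>R Q (T e)" using Tz Qd by simp
      hence "(1 / norm (P z)) *\<^sub>R (norm (P z) *\<^sub>R Q (T b) + f z *\<^sub>R Q (T e)) = 0" by simp
      hence "Q (T b) + (f z / norm (P z)) *\<^sub>R Q (T e) = 0" using False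
        by (simp only: scaleR_add_right scaleR_scaleR) simp
      hence "Q (T b) = - ((f z / norm (P z)) *\<^sub>R Q (T e))" by (simp add: eq_neg_iff_add_eq_0)
      hence "Q (T b) = (- f z / norm (P z)) *\<^sub>R Q (T e)" by simp
      moreover have "Q (T e) = 1 *\<^sub>R Q (T e)" by simp
      ultimately show ?thesis using fb nb by blast
    qed
  qed
  then obtain b p \<alpha> \<beta> where fb: "f b = 0" and nb: "norm (P b) = 1"
    and pa: "Q (T e) = \<alpha> *\<^sub>R p" and pb: "Q (T b) = \<beta> *\<^sub>R p" by blast
  define c1 where "c1 = g (T e)"
  define c2 where "c2 = g (T b)"
  have N1e: "N1 e = 1" unfolding N1_def using Pe fe by simp
  have N1b: "N1 b = 1" unfolding N1_def using nb fb by simp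
  have Te: "(N2 (T e))\<^sup>2 \<le> m\<^sup>2" using hm[of e] N1e N2nn by (simp add: power_mono)
  have Tb: "(N2 (T b))\<^sup>2 \<le> m\<^sup>2" using hm[of b] N1b N2nn by (simp add: power_mono)
  have Te': "(N2 (T e))\<^sup>2 = \<alpha>\<^sup>2 * (norm p)\<^sup>2 + c1\<^sup>2"
    unfolding N2_def c1_def pa by (simp add: power_mult_distrib)
  have Tb': "(N2 (T b))\<^sup>2 = \<beta>\<^sup>2 * (norm p)\<^sup>2 + c2\<^sup>2"
    unfolding N2_def c2_def pb by (simp add: power_mult_distrib)
  have side: "1 \<le> n\<^sup>2 * ((\<alpha> + s * \<beta>)\<^sup>2 * (norm p)\<^sup>2 + (c1 + s * c2)\<^sup>2) / 4" if s: "\<bar>s\<bar> = 1" for s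
  proof -
    define x where "x = (1/2) *\<^sub>R (e + s *\<^sub>R b)"
    have "N1 x = 1" unfolding x_def N1_def using Pe fe fb nb s
      by (simp add: P.scaleR P.add f.scaleR f.add)
    hence "1 \<le> n * N2 (T x)" using hinv[of x] by simp
    hence "1\<^sup>2 \<le> (n * N2 (T x))\<^sup>2" by (rule power_mono) simp
    moreover have "(N2 (T x))\<^sup>2 = ((\<alpha> + s * \<beta>)\<^sup>2 * (norm p)\<^sup>2 + (c1 + s * c2)\<^sup>2) / 4"
    proof -
      have "Q (T x) = ((\<alpha> + s * \<beta>)/2) *\<^sub>R p" unfolding x_def
        by (simp add: T.scaleR T.add Q.scaleR Q.add pa pb algebra_simps add_divide_distrib flip: scaleR_add_left)
      moreover have "g (T x) = (c1 + s * c2) / 2" unfolding x_def c1_def c2_def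
        by (simp add: T.scaleR T.add g.scaleR g.add algebra_simps)
      moreover have "(N2 (T x))\<^sup>2 = (norm (Q (T x)))\<^sup>2 + (g (T x))\<^sup>2" unfolding N2_def by simp
      ultimately have "(N2 (T x))\<^sup>2 = ((\<alpha> + s * \<beta>)/2)\<^sup>2 * (norm p)\<^sup>2 + ((c1 + s * c2) / 2)\<^sup>2"
        by (simp only: norm_scaleR power_mult_distrib power2_abs)
      also have "\<dots> = ((\<alpha> + s * \<beta>)\<^sup>2 * (norm p)\<^sup>2 + (c1 + s * c2)\<^sup>2) / 4"
        by (simp add: power2_eq_square field_simps)
      finally show ?thesis .
    qed
    ultimately show ?thesis by (simp add: power_mult_distrib)
  qed
  have s1: "4 \<le> n\<^sup>2 * ((\<alpha> + \<beta>)\<^sup>2 * (norm p)\<^sup>2 + (c1 + c2)\<^sup>2)" using side[of 1] by simp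
  have s2: "4 \<le> n\<^sup>2 * ((\<alpha> - \<beta>)\<^sup>2 * (norm p)\<^sup>2 + (c1 - c2)\<^sup>2)" using side[of "-1"] by simp
  have "8 \<le> n\<^sup>2 * (2 * ((N2 (T e))\<^sup>2 + (N2 (T b))\<^sup>2))"
  proof -
    have "((\<alpha> + \<beta>)\<^sup>2 * (norm p)\<^sup>2 + (c1 + c2)\<^sup>2) + ((\<alpha> - \<beta>)\<^sup>2 * (norm p)\<^sup>2 + (c1 - c2)\<^sup>2)
        = 2 * ((N2 (T e))\<^sup>2 + (N2 (T b))\<^sup>2)" unfolding Te' Tb' by (simp add: power2_eq_square algebra_simps)
    thus ?thesis using s1 s2 by (smt (verit) distrib_left)
  qed
  also have "\<dots> \<le> n\<^sup>2 * (4 * m\<^sup>2)" using Te Tb by (intro mult_left_mono) auto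
  finally have "2 \<le> (m * n)\<^sup>2" by (simp add: power_mult_distrib)
  hence "sqrt 2 \<le> m * n" using m0 n0 by (intro real_le_lsqrt) auto
  thus "ereal (sqrt 2) \<le> opnorm N1 N2 T * opnorm N2 N1 (inv T)" using m n by simp
qed


lemma sq1: fixes A b :: real assumes "0 \<le> A" shows "sqrt (A\<^sup>2 + b\<^sup>2) \<le> A + \<bar>b\<bar>"
proof (rule real_le_lsqrt)
  show "0 \<le> A + \<bar>b\<bar>" using assms by simp
  have "0 \<le> A * \<bar>b\<bar>" using assms by simp
  thus "A\<^sup>2 + b\<^sup>2 \<le> (A + \<bar>b\<bar>)\<^sup>2" by (simp add: power2_sum)
qed
lemma sq2: fixes A b :: real shows "A + \<bar>b\<bar> \<le> sqrt 2 * sqrt (A\<^sup>2 + b\<^sup>2)"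
proof -
  have "0 \<le> (A - \<bar>b\<bar>)\<^sup>2" by simp
  hence "(A + \<bar>b\<bar>)\<^sup>2 \<le> 2 * (A\<^sup>2 + b\<^sup>2)" by (simp add: power2_diff power2_sum)
  hence "A + \<bar>b\<bar> \<le> sqrt (2 * (A\<^sup>2 + b\<^sup>2))" by (rule real_le_rsqrt)
  thus ?thesis by (simp only: real_sqrt_mult)
qed
lemma sq3: fixes A b :: real shows "A + \<bar>b\<bar> \<le> 2 * sqrt (A\<^sup>2 + b\<^sup>2)"
proof -
  have "A \<le> sqrt (A\<^sup>2 + b\<^sup>2)" by simp
  moreover have "\<bar>b\<bar> \<le> sqrt (A\<^sup>2 + b\<^sup>2)" by (metis real_sqrt_abs real_sqrt_le_mono le_add_same_cancel2 zero_le_power2)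
  ultimately show ?thesis by linarith
qed
lemma vn: fixes u v :: "'a::real_vector" assumes "u \<noteq> v" "independent {u, v}" shows "v \<notin> span {u}"
proof
  assume "v \<in> span {u}"
  moreover have "{u,v} - {v} = {u}" using assms(1) by auto
  ultimately have "dependent {u,v}" unfolding dependent_def by force
  thus False using assms(2) by blast
qed

lemma sum1_eq: "sum_p_norm 1 = (\<lambda>x::'a::real_normed_vector \<times> real. norm (fst x) + \<bar>snd x\<bar>)"
  unfolding sum_p_norm_def by (auto simp: powr_one)

lemma sum2_eq: "sum_p_norm 2 = (\<lambda>x::'a::real_normed_vector \<times> real. sqrt ((norm (fst x))\<^sup>2 + (snd x)\<^sup>2))"
  unfolding sum_p_norm_def by (auto simp: powr_half_sqrt)

lemma lp1_eq: "lp2_norm 1 = (\<lambda>x. norm (fst x) + \<bar>snd x\<bar>)"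
  unfolding lp2_norm_def by (auto simp: powr_one)

lemma lp2_eq: "lp2_norm 2 = (\<lambda>x. sqrt ((norm (fst x))\<^sup>2 + (snd x)\<^sup>2))"
  unfolding lp2_norm_def by (auto simp: powr_half_sqrt)

lemma key_prod:
  fixes y0 :: "'y::real_normed_vector"
  assumes "y0 \<noteq> 0"
  shows "ereal (sqrt 2) \<le> bm_dist (\<lambda>x::'y \<times> real. norm (fst x) + \<bar>snd x\<bar>)
     (\<lambda>x::'z::real_normed_vector \<times> real. sqrt ((norm (fst x))\<^sup>2 + (snd x)\<^sup>2))"
proof -
  have a: "\<And>x::'y \<times> real. fst x = 0 \<Longrightarrow> snd x = 0 \<Longrightarrow> x = 0" by (simp add: prod_eq_iff)
  have b: "\<And>x::'z \<times> real. fst x = 0 \<Longrightarrow> snd x = 0 \<Longrightarrow> x = 0" by (simp add: prod_eq_iff)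
  show ?thesis
    by (rule key[OF linear_fst linear_snd a _ _ _ _ linear_fst linear_snd b, of "(0,1)" "(y0,0)" "(0,1)"])
       (simp_all add: assms)
qed

lemma lp_upper: "bm_dist (lp2_norm 1) (lp2_norm 2) \<le> ereal (sqrt 2)"
proof -
  define N1 where "N1 = (\<lambda>x::real \<times> real. norm (fst x) + \<bar>snd x\<bar>)"
  define N2 where "N2 = (\<lambda>x::real \<times> real. sqrt ((norm (fst x))\<^sup>2 + (snd x)\<^sup>2))"
  have a: "N2 x \<le> N1 x" for x unfolding N1_def N2_def by (rule sq1) simp
  have b: "N1 x \<le> sqrt 2 * N2 x" for x unfolding N1_def N2_def by (rule sq2)
  have o1: "opnorm N1 N2 id \<le> ereal 1" unfolding opnorm_def
  proof (rule SUP_least)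
    fix x assume "x \<in> {x. N1 x \<le> 1}"
    thus "ereal (N2 (id x)) \<le> ereal 1" using a[of x] by simp
  qed
  have o2: "opnorm N2 N1 id \<le> ereal (sqrt 2)" unfolding opnorm_def
  proof (rule SUP_least)
    fix x assume "x \<in> {x. N2 x \<le> 1}"
    hence "sqrt 2 * N2 x \<le> sqrt 2 * 1" by (intro mult_left_mono) auto
    hence "N1 x \<le> sqrt 2 * 1" using b[of x] by linarith
    thus "ereal (N1 (id x)) \<le> ereal (sqrt 2)" by simp
  qed
  have z1: "ereal 0 \<le> opnorm N1 N2 id" unfolding opnorm_def
    by (rule SUP_upper2[of 0]) (auto simp: N1_def N2_def)
  have z2: "ereal 0 \<le> opnorm N2 N1 id" unfolding opnorm_def
    by (rule SUP_upper2[of 0]) (auto simp: N1_def N2_def)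
  obtain m where m: "opnorm N1 N2 id = ereal m" using o1 z1 by (cases "opnorm N1 N2 id") auto
  obtain n where n: "opnorm N2 N1 id = ereal n" using o2 z2 by (cases "opnorm N2 N1 id") auto
  have lid: "linear (id :: real \<times> real \<Rightarrow> real \<times> real)" by (simp add: linear_iff)
  have "bm_dist N1 N2 \<le> opnorm N1 N2 id * opnorm N2 N1 (inv id)"
    unfolding bm_dist_def by (rule INF_lower) (simp add: m n inv_id lid)
  also have "\<dots> = ereal (m * n)" by (simp add: m n inv_id)
  also have "\<dots> \<le> ereal (1 * sqrt 2)"
  proof -
    have "m \<le> 1" "n \<le> sqrt 2" "0 \<le> m" "0 \<le> n" using o1 o2 z1 z2 m n by auto
    hence "m * n \<le> 1 * sqrt 2" by (intro mult_mono) auto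
    thus ?thesis by simp
  qed
  finally show ?thesis unfolding N1_def N2_def lp1_eq lp2_eq by simp
qed

lemma lp_eq: "bm_dist (lp2_norm 1) (lp2_norm 2) = ereal (sqrt 2)"
proof (rule antisym[OF lp_upper])
  show "ereal (sqrt 2) \<le> bm_dist (lp2_norm 1) (lp2_norm 2)"
    unfolding lp1_eq lp2_eq by (rule key_prod[of "1::real"]) simp
qed

lemma part1:
  fixes u v :: "'x::banach"
  assumes "u \<noteq> v" "independent {u, v}"
  shows "ereal (sqrt 2) \<le> BM_D (TYPE('x))"
proof -
  have u0: "u \<noteq> 0" using assms(2) dependent_zero by blast
  have vnot: "v \<notin> span {u}" using vn[OF assms] .
  obtain f where lf: "linear f" and fb: "\<And>x. \<bar>f x\<bar> \<le> norm x" and fu: "f u = norm u"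
    using hahn_banach_norm[of u] by blast
  interpret f: linear f by fact
  define e where "e = (1 / norm u) *\<^sub>R u"
  have fe: "f e = 1" unfolding e_def using u0 fu by (simp add: f.scaleR)
  have ne: "norm e = 1" unfolding e_def using u0 by simp
  define P where "P x = x - f x *\<^sub>R e" for x
  have lP: "linear P" unfolding P_def
    by (rule linearI) (simp_all add: f.add f.scaleR scaleR_add_left scaleR_diff_right algebra_simps)
  interpret P: linear P by fact
  have Pe: "P e = 0" unfolding P_def using fe by simp
  have fP: "f (P x) = 0" for x unfolding P_def using fe by (simp add: f.diff f.scaleR)
  have inj: "x = 0" if "P x = 0" "f x = 0" for x using that unfolding P_def by simp
  have Pv: "P v \<noteq> 0"
  proof
    assume "P v = 0"
    hence "v = (f v / norm u) *\<^sub>R u" unfolding P_def e_def by simp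
    hence "v \<in> span {u}" by (metis span_base span_scale singletonI)
    thus False using vnot by blast
  qed
  define N1 where "N1 = (\<lambda>x. norm (P x) + \<bar>f x\<bar>)"
  define N2 where "N2 = (\<lambda>x. sqrt ((norm (P x))\<^sup>2 + (f x)\<^sup>2))"
  have PPv: "P (P v) = P v"
  proof -
    have "f (P v) = 0" by (rule fP)
    thus ?thesis using P_def[of "P v"] by simp
  qed
  have K: "ereal (sqrt 2) \<le> bm_dist N1 N2"
    unfolding N1_def N2_def
    apply (rule key[of P f e "P v" P f e])
    apply (rule lP) apply (rule lf) apply (erule (1) inj) apply (rule Pe) apply (rule fe) apply (rule fP)
    apply (subst PPv, rule Pv)
    apply (rule lP) apply (rule lf) apply (erule (1) inj) apply (rule Pe) apply (rule fe)
    done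
  have nP: "norm (P x) \<le> 2 * norm x" for x
  proof -
    have "norm (P x) \<le> norm x + norm (f x *\<^sub>R e)" unfolding P_def by (rule norm_triangle_ineq4)
    thus ?thesis using fb[of x] ne by simp
  qed
  have xle: "norm x \<le> N1 x" for x
  proof -
    have "x = P x + f x *\<^sub>R e" unfolding P_def by simp
    hence "norm x \<le> norm (P x) + norm (f x *\<^sub>R e)" by (metis norm_triangle_ineq)
    thus ?thesis unfolding N1_def using ne by simp
  qed
  have N21: "N2 x \<le> N1 x" for x unfolding N1_def N2_def by (rule sq1) simp
  have N12: "N1 x \<le> 2 * N2 x" for x unfolding N1_def N2_def by (rule sq3)
  have isn1: "is_norm N1" unfolding is_norm_def
  proof (intro conjI allI)
    fix x show "0 \<le> N1 x" unfolding N1_def by simp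
    show "N1 x = 0 \<longleftrightarrow> x = 0"
    proof
      assume "N1 x = 0"
      hence "norm (P x) = 0" "f x = 0" unfolding N1_def by (smt (verit) norm_ge_zero abs_ge_zero)+
      thus "x = 0" using inj by simp
    qed (simp add: N1_def P.zero f.zero)
  next
    fix x y show "N1 (x + y) \<le> N1 x + N1 y" unfolding N1_def
      using add_mono[OF norm_triangle_ineq[of "P x" "P y"] abs_triangle_ineq[of "f x" "f y"]]
      by (simp add: P.add f.add algebra_simps)
  next
    fix c x show "N1 (c *\<^sub>R x) = \<bar>c\<bar> * N1 x"
      unfolding N1_def by (simp add: P.scaleR f.scaleR abs_mult distrib_left)
  qed
  have isn2: "is_norm N2" unfolding is_norm_def
  proof (intro conjI allI)
    fix x show "0 \<le> N2 x" unfolding N2_def by simp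
    show "N2 x = 0 \<longleftrightarrow> x = 0"
    proof
      assume "N2 x = 0"
      hence "(norm (P x))\<^sup>2 + (f x)\<^sup>2 = 0" unfolding N2_def by simp
      hence "norm (P x) = 0" "f x = 0" by (smt (verit) zero_le_power2 power_zero_numeral zero_less_power2)+
      thus "x = 0" using inj by simp
    qed (simp add: N2_def P.zero f.zero)
  next
    fix x y
    have "N2 (x + y) \<le> sqrt ((norm (P x) + norm (P y))\<^sup>2 + (f x + f y)\<^sup>2)"
      unfolding N2_def by (simp add: P.add f.add power_mono norm_triangle_ineq)
    also have "\<dots> \<le> N2 x + N2 y" unfolding N2_def by (rule real_sqrt_sum_squares_triangle_ineq)
    finally show "N2 (x + y) \<le> N2 x + N2 y" .
  next
    fix c x
    have "(norm (P (c *\<^sub>R x)))\<^sup>2 + (f (c *\<^sub>R x))\<^sup>2 = c\<^sup>2 * ((norm (P x))\<^sup>2 + (f x)\<^sup>2)"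
      by (simp add: P.scaleR f.scaleR power_mult_distrib algebra_simps)
    thus "N2 (c *\<^sub>R x) = \<bar>c\<bar> * N2 x" unfolding N2_def by (simp add: real_sqrt_mult)
  qed
  have N1le: "N1 x \<le> 3 * norm x" for x unfolding N1_def using nP[of x] fb[of x] by simp
  have e1: "equiv_norm N1" unfolding equiv_norm_def
    using isn1 xle N1le by (intro conjI exI[of _ 1] exI[of _ 3]) auto
  have h2: "1/2 * norm x \<le> N2 x \<and> N2 x \<le> 3 * norm x" for x
    using xle[of x] N12[of x] N21[of x] N1le[of x] by simp
  have e2: "equiv_norm N2" unfolding equiv_norm_def
    using isn2 h2 by (intro conjI exI[of _ "1/2"] exI[of _ 3]) auto
  have "bm_dist N1 N2 \<le> BM_D (TYPE('x))"
    unfolding BM_D_def by (rule SUP_upper2[of "(N1, N2)"]) (use e1 e2 in auto)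
  thus ?thesis using K by simp
qed

theorem mainTheorem3:
  shows "((\<exists>u v::'x::banach. u \<noteq> v \<and> independent {u, v}) \<longrightarrow> ereal (sqrt 2) \<le> BM_D (TYPE('x)))
     \<and> ((\<exists>y::'y::banach. y \<noteq> 0) \<longrightarrow>
          bm_dist (sum_p_norm 1 :: 'y \<times> real \<Rightarrow> real) (sum_p_norm 2) \<ge> bm_dist (lp2_norm 1) (lp2_norm 2))
     \<and> bm_dist (lp2_norm 1) (lp2_norm 2) = ereal (sqrt 2)"
proof (intro conjI impI)
  show "\<exists>u v::'x. u \<noteq> v \<and> independent {u, v} \<Longrightarrow> ereal (sqrt 2) \<le> BM_D TYPE('x)"
    using part1 by blast
  show "bm_dist (lp2_norm 1) (lp2_norm 2) = ereal (sqrt 2)" by (rule lp_eq)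
  assume "\<exists>y::'y. y \<noteq> 0"
  then obtain y0 :: 'y where "y0 \<noteq> 0" by blast
  thus "bm_dist (lp2_norm 1) (lp2_norm 2) \<le> bm_dist (sum_p_norm 1 :: 'y \<times> real \<Rightarrow> real) (sum_p_norm 2)"
    unfolding lp_eq sum1_eq sum2_eq by (rule key_prod)
qed

end
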